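(* For every integer $n\ge 1$, the triangular stacked prism $Y_{3,n}$ is odd prime.
   Context: All graphs are finite and simple. A graph $G$ of order $N$ is odd prime if there is a bijection $\ell:V(G)\to\{1,3,\ldots,2N-1\}$ with $\gcd(\ell(u),\ell(v))=1$ for every edge $uv$. For $k\ge 3$, $n\ge 1$, the stacked prism $Y_{k,n}$ is the Cartesian product $C_k\,\square\,P_n$ of a $k$-cycle and a path on $n$ vertices: vertices $v_{i,j}$ ($1\le i\le n$, $1\le j\le k$), with edges $v_{i,j}v_{i,j+1}$ ($1\le j\le k-1$), $v_{i,k}v_{i,1}$ for each $i$, and $v_{i,j}v_{i+1,j}$ for $1\le i\le n-1$, $1\le j\le k$. *)

theory Defs
  imports Main
begin

definition odd_prime_graph :: "'a set \<Rightarrow> ('a \<Rightarrow> 'a \<Rightarrow> bool) \<Rightarrow> bool" where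
  "odd_prime_graph V E \<longleftrightarrow>
     (\<exists>l :: 'a \<Rightarrow> nat. bij_betw l V {m. odd m \<and> 1 \<le> m \<and> m \<le> 2 * card V - 1} \<and>
        (\<forall>u\<in>V. \<forall>v\<in>V. E u v \<longrightarrow> coprime (l u) (l v)))"

text \<open>Stacked prism Y_{k,n} = C_k \<box> P_n: vertex (i,j) stands for v_{i,j},
  1 \<le> i \<le> n, 1 \<le> j \<le> k.\<close>

definition prism_vertices :: "nat \<Rightarrow> nat \<Rightarrow> (nat \<times> nat) set" where
  "prism_vertices k n = {1..n} \<times> {1..k}"

definition prism_edge :: "nat \<Rightarrow> nat \<Rightarrow> nat \<times> nat \<Rightarrow> nat \<times> nat \<Rightarrow> bool" where
  "prism_edge k n x y \<longleftrightarrow> x \<in> prism_vertices k n \<and> y \<in> prism_vertices k n \<and>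
     (let (i, j) = x; (i', j') = y in
       (i = i' \<and> (j' = j + 1 \<or> j = j' + 1 \<or> (j = k \<and> j' = 1) \<or> (j = 1 \<and> j' = k)))
       \<or> (j = j' \<and> (i' = i + 1 \<or> i = i' + 1)))"

end

theory Submission
  imports Defs
begin

definition lab :: "nat \<times> nat \<Rightarrow> nat" where
  "lab x = 6 * fst x - 5 + 2 * ((fst x + snd x) mod 3)"

lemma cop_aux:
  fixes a d :: nat
  assumes "odd a" "d \<in> {2,4,8}"
  shows "coprime a (a + d)"
proof -
  have "coprime a (2::nat)" using assms(1) by simp
  hence "coprime a ((2::nat)^k)" for k by simp
  moreover have "d = 2^1 \<or> d = 2^2 \<or> d = 2^3" using assms(2) by auto
  ultimately have "coprime a d" by metis
  thus ?thesis by (simp add: coprime_iff_gcd_eq_1)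
qed

lemma lab_odd: "fst x \<ge> 1 \<Longrightarrow> odd (lab x)"
  unfolding lab_def by presburger

lemma lab_h:
  assumes "i \<ge> 1" "j \<in> {1,2,3}" "j' \<in> {1,2,3}" "j \<noteq> j'"
  shows "\<exists>d\<in>{2,4,8}. lab (i,j') = lab (i,j) + d \<or> lab (i,j) = lab (i,j') + d"
proof -
  define B where "B = 6 * i - 5"
  define r where "r = i mod 3"
  have r3: "r = 0 \<or> r = 1 \<or> r = 2" unfolding r_def by auto
  have l: "lab (i,k) = B + 2 * ((r + k) mod 3)" for k
    unfolding lab_def B_def r_def by (simp add: mod_add_left_eq)
  show ?thesis unfolding l using r3 assms(2,3,4) by auto
qed

lemma lab_v:
  assumes "i \<ge> 1"
  shows "\<exists>d\<in>{2,4,8}. lab (i+1,j) = lab (i,j) + d"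
proof -
  define a where "a = (i + j) mod 3"
  have a3: "a = 0 \<or> a = 1 \<or> a = 2" unfolding a_def by auto
  have l1: "lab (i,j) = 6 * i - 5 + 2 * a" unfolding lab_def a_def by simp
  have "(i + 1 + j) mod 3 = (a + 1) mod 3" unfolding a_def by (simp add: mod_Suc_eq)
  hence l2: "lab (i+1,j) = 6 * i + 1 + 2 * ((a + 1) mod 3)" unfolding lab_def by simp
  show ?thesis unfolding l1 l2 using a3 assms by auto
qed

lemma lab_diff:
  assumes "prism_edge 3 n x y"
  shows "\<exists>d\<in>{2,4,8}. lab y = lab x + d \<or> lab x = lab y + d"
proof -
  obtain i j i' j' where xy: "x = (i,j)" "y = (i',j')" by force
  have r: "i \<ge> 1" "i' \<ge> 1" "j \<in> {1,2,3}" "j' \<in> {1,2,3}"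
    using assms unfolding prism_edge_def prism_vertices_def xy by auto
  have e: "(i = i' \<and> j \<noteq> j') \<or> (j = j' \<and> (i' = i + 1 \<or> i = i' + 1))"
    using assms unfolding prism_edge_def xy by auto
  then show ?thesis
  proof
    assume "i = i' \<and> j \<noteq> j'" then show ?thesis using lab_h[OF r(1,3,4)] xy by auto
  next
    assume "j = j' \<and> (i' = i + 1 \<or> i = i' + 1)"
    then show ?thesis using lab_v[OF r(1), of j] lab_v[OF r(2), of j] xy by auto
  qed
qed

lemma card_odds: "card {m::nat. odd m \<and> 1 \<le> m \<and> m \<le> 2 * N - 1} = N"
proof -
  have "{m::nat. odd m \<and> 1 \<le> m \<and> m \<le> 2 * N - 1} = (\<lambda>k. 2*k+1) ` {..<N}"
  proof (auto simp: image_iff)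
    fix x :: nat assume "odd x" "x \<le> 2 * N - Suc 0"
    then show "\<exists>k\<in>{..<N}. x = Suc (2 * k)"
    proof -
      obtain k where k: "x = 2 * k + 1" using \<open>odd x\<close> oddE by blast
      then show ?thesis using \<open>x \<le> 2 * N - Suc 0\<close> by (intro bexI[of _ k]) auto
    qed
  qed
  moreover have "inj_on (\<lambda>k::nat. 2*k+1) {..<N}" by (auto simp: inj_on_def)
  ultimately show ?thesis by (simp add: card_image)
qed


theorem theorem3p6:
  fixes n :: nat
  assumes "n \<ge> 1"
  shows "odd_prime_graph (prism_vertices 3 n) (prism_edge 3 n)"
proof -
  let ?V = "prism_vertices 3 n"
  let ?T = "{m::nat. odd m \<and> 1 \<le> m \<and> m \<le> 2 * card ?V - 1}"
  have cV: "card ?V = 3 * n" by (simp add: prism_vertices_def card_cartesian_product)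
  have fin: "finite ?V" by (simp add: prism_vertices_def)
  have inj: "inj_on lab ?V"
  proof (rule inj_onI)
    fix x y assume xy: "x \<in> ?V" "y \<in> ?V" "lab x = lab y"
    obtain i j i' j' where p: "x = (i,j)" "y = (i',j')" by force
    have r: "i \<ge> 1" "i' \<ge> 1" "j \<in> {1,2,3}" "j' \<in> {1,2,3}"
      using xy unfolding prism_vertices_def p by auto
    have m: "i mod 3 = 0 \<or> i mod 3 = 1 \<or> i mod 3 = 2" by presburger
    have "i = i'" using xy(3) r unfolding p lab_def by simp
    moreover have "(i mod 3 + j) mod 3 = (i mod 3 + j') mod 3"
      using xy(3) r \<open>i = i'\<close> unfolding p lab_def by (simp add: mod_add_left_eq)
    hence "j = j'" using m r by auto
    ultimately show "x = y" using p by simp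
  qed
  have sub: "lab ` ?V \<subseteq> ?T"
  proof
    fix m assume "m \<in> lab ` ?V"
    then obtain i j where "m = lab (i,j)" "i \<in> {1..n}" "j \<in> {1..3}"
      by (auto simp: prism_vertices_def)
    moreover have mlt: "(i + j) mod 3 < 3" by simp
    moreover have "odd m" using \<open>m = lab (i,j)\<close> \<open>i \<in> {1..n}\<close> lab_odd[of "(i,j)"] by simp
    ultimately show "m \<in> ?T" unfolding cV lab_def using mlt by (simp; linarith)
  qed
  have eq: "lab ` ?V = ?T"
    by (rule card_subset_eq) (use sub inj fin card_odds in \<open>auto simp: card_image\<close>)
  have bij: "bij_betw lab ?V ?T" using inj eq by (simp add: bij_betw_def)
  have cop: "\<forall>u\<in>?V. \<forall>v\<in>?V. prism_edge 3 n u v \<longrightarrow> coprime (lab u) (lab v)"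
  proof (intro ballI impI)
    fix u v assume "u \<in> ?V" "v \<in> ?V" and e: "prism_edge 3 n u v"
    have o: "odd (lab u)" "odd (lab v)" using \<open>u \<in> ?V\<close> \<open>v \<in> ?V\<close>
      by (auto intro!: lab_odd simp: prism_vertices_def)
    from lab_diff[OF e] obtain d where d: "d \<in> {2,4,8}" "lab v = lab u + d \<or> lab u = lab v + d" by blast
    then show "coprime (lab u) (lab v)"
      using cop_aux[OF o(1) d(1)] cop_aux[OF o(2) d(1)] by (auto simp: coprime_commute)
  qed
  show ?thesis unfolding odd_prime_graph_def using bij cop by blast
qed

end
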